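(* Let $\psi:\mathbb{H}\to\mathbb{H}$ be a linear isometry. The pair $(\varphi,\psi)=(\sigma_{\mathbb{H}},\psi)$ satisfies (i) $\varphi(\varphi(x)x)=\varphi(x)x$ for all $x$, (ii) $\varphi(\bar x\psi(x))=\bar x\psi(x)$ for all $x$, (iii) $\psi(\psi(y)\bar x+y\varphi(x))=\psi(y)\bar x+y\varphi(x)$ for all $x,y$, if and only if $\psi=\pm I_{\mathbb{H}}$.
   Context: $\sigma_{\mathbb{H}}(x)=\bar x$ is quaternion conjugation on $\mathbb{H}$; $I_{\mathbb{H}}$ is the identity. *)

theory Defs
  imports "HOL-Analysis.Analysis"
begin

text \<open>The quaternions H are modelled as the Euclidean space real^4, with coordinates
  (x$1, x$2, x$3, x$4) = (real part, i, j, k). The Euclidean norm on real^4 is the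
  quaternion norm.\<close>

type_synonym quat = "real ^ 4"

definition qmk :: "real \<Rightarrow> real \<Rightarrow> real \<Rightarrow> real \<Rightarrow> quat" where
  "qmk a b c d = (\<chi> i. if i = 1 then a else if i = 2 then b else if i = 3 then c else d)"

definition qmult :: "quat \<Rightarrow> quat \<Rightarrow> quat" where
  "qmult x y = qmk
     (x$1 * y$1 - x$2 * y$2 - x$3 * y$3 - x$4 * y$4)
     (x$1 * y$2 + x$2 * y$1 + x$3 * y$4 - x$4 * y$3)
     (x$1 * y$3 - x$2 * y$4 + x$3 * y$1 + x$4 * y$2)
     (x$1 * y$4 + x$2 * y$3 - x$3 * y$2 + x$4 * y$1)"

definition qconj :: "quat \<Rightarrow> quat" where
  "qconj x = qmk (x$1) (- x$2) (- x$3) (- x$4)"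

end

theory Submission
  imports Defs
begin

lemma qmk_nth[simp]: "qmk a b c d $ 1 = a" "qmk a b c d $ 2 = b" "qmk a b c d $ 3 = c" "qmk a b c d $ 4 = d"
  by (simp_all add: qmk_def)

lemma qmk_eq[simp]: "qmk a b c d = qmk a' b' c' d' \<longleftrightarrow> a = a' \<and> b = b' \<and> c = c' \<and> d = d'"
  by (auto simp add: vec_eq_iff forall_4)

lemma real_iff: "qconj z = z \<longleftrightarrow> z$2=0 \<and> z$3=0 \<and> z$4=0"
  by (auto simp add: qconj_def vec_eq_iff forall_4)

lemma qdecomp: "(x::quat) = x$1 *\<^sub>R qmk 1 0 0 0 + x$2 *\<^sub>R qmk 0 1 0 0 + x$3 *\<^sub>R qmk 0 0 1 0 + x$4 *\<^sub>R qmk 0 0 0 1"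
  by (simp add: vec_eq_iff forall_4)

lemma norm_qmk: "norm (qmk a b c d) ^ 2 = a^2+b^2+c^2+d^2"
  by (simp only: power2_norm_eq_inner) (simp add: inner_vec_def sum_4 power2_eq_square)

theorem lemma11:
  fixes \<psi> :: "quat \<Rightarrow> quat"
  assumes "linear \<psi>" and "\<And>x. norm (\<psi> x) = norm x"
  shows "((\<forall>x. qconj (qmult (qconj x) x) = qmult (qconj x) x) \<and>
          (\<forall>x. qconj (qmult (qconj x) (\<psi> x)) = qmult (qconj x) (\<psi> x)) \<and>
          (\<forall>x y. \<psi> (qmult (\<psi> y) (qconj x) + qmult y (qconj x))
                   = qmult (\<psi> y) (qconj x) + qmult y (qconj x)))
         \<longleftrightarrow> (\<psi> = id \<or> \<psi> = (\<lambda>x. - x))"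
proof
  assume "\<psi> = id \<or> \<psi> = (\<lambda>x. - x)"
  then show "((\<forall>x. qconj (qmult (qconj x) x) = qmult (qconj x) x) \<and>
          (\<forall>x. qconj (qmult (qconj x) (\<psi> x)) = qmult (qconj x) (\<psi> x)) \<and>
          (\<forall>x y. \<psi> (qmult (\<psi> y) (qconj x) + qmult y (qconj x))
                   = qmult (\<psi> y) (qconj x) + qmult y (qconj x)))"
  proof
    assume "\<psi> = id" then show ?thesis
      by (auto simp add: real_iff qmult_def qconj_def algebra_simps)
  next
    assume p: "\<psi> = (\<lambda>x. - x)"
    have "qmult (- y) z + qmult y z = 0" for y z
      by (simp add: vec_eq_iff forall_4 qmult_def)
    then have "\<forall>x y. \<psi> (qmult (\<psi> y) (qconj x) + qmult y (qconj x))
                   = qmult (\<psi> y) (qconj x) + qmult y (qconj x)" using p by simp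
    moreover have "\<forall>x. qconj (qmult (qconj x) x) = qmult (qconj x) x"
      by (auto simp add: real_iff qmult_def qconj_def algebra_simps)
    moreover have "\<forall>x. qconj (qmult (qconj x) (\<psi> x)) = qmult (qconj x) (\<psi> x)"
      using p by (auto simp add: real_iff qmult_def qconj_def algebra_simps)
    ultimately show ?thesis by blast
  qed
next
  assume H: "((\<forall>x. qconj (qmult (qconj x) x) = qmult (qconj x) x) \<and>
          (\<forall>x. qconj (qmult (qconj x) (\<psi> x)) = qmult (qconj x) (\<psi> x)) \<and>
          (\<forall>x y. \<psi> (qmult (\<psi> y) (qconj x) + qmult y (qconj x))
                   = qmult (\<psi> y) (qconj x) + qmult y (qconj x)))"
  define e1 where "e1 = qmk 1 0 0 0"
  define e2 where "e2 = qmk 0 1 0 0"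
  define e3 where "e3 = qmk 0 0 1 0"
  define e4 where "e4 = qmk 0 0 0 1"
  have ii: "\<And>x. qconj (qmult (qconj x) (\<psi> x)) = qmult (qconj x) (\<psi> x)" using H by blast
  have lin: "\<And>x y. \<psi> (x + y) = \<psi> x + \<psi> y" "\<And>c x. \<psi> (c *\<^sub>R x) = c *\<^sub>R \<psi> x"
    using assms(1) by (simp_all add: linear_add linear_scale)
  have a1: "\<psi> e1 $ 2 = 0 \<and> \<psi> e1 $ 3 = 0 \<and> \<psi> e1 $ 4 = 0"
    using ii[of e1] by (simp add: real_iff e1_def qmult_def qconj_def)
  have a2: "\<psi> e2 $ 1 = 0 \<and> \<psi> e2 $ 3 = 0 \<and> \<psi> e2 $ 4 = 0"
    using ii[of e2] by (simp add: real_iff e2_def qmult_def qconj_def)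
  have a3: "\<psi> e3 $ 1 = 0 \<and> \<psi> e3 $ 2 = 0 \<and> \<psi> e3 $ 4 = 0"
    using ii[of e3] by (simp add: real_iff e3_def qmult_def qconj_def)
  have a4: "\<psi> e4 $ 1 = 0 \<and> \<psi> e4 $ 2 = 0 \<and> \<psi> e4 $ 3 = 0"
    using ii[of e4] by (simp add: real_iff e4_def qmult_def qconj_def)
  have b2: "\<psi> e2 $ 2 = \<psi> e1 $ 1"
    using ii[of "e1 + e2"] a1 a2 by (simp add: lin real_iff e1_def e2_def qmult_def qconj_def)
  have b3: "\<psi> e3 $ 3 = \<psi> e1 $ 1"
    using ii[of "e1 + e3"] a1 a3 by (simp add: lin real_iff e1_def e3_def qmult_def qconj_def)
  have b4: "\<psi> e4 $ 4 = \<psi> e1 $ 1"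
    using ii[of "e1 + e4"] a1 a4 by (simp add: lin real_iff e1_def e4_def qmult_def qconj_def)
  define c where "c = \<psi> e1 $ 1"
  have pe1: "\<psi> e1 = qmk c 0 0 0" using a1 by (simp add: c_def vec_eq_iff forall_4)
  have "norm (qmk c 0 0 0) ^ 2 = norm (qmk 1 0 0 0 :: quat) ^ 2" using assms(2)[of e1] pe1 e1_def by simp
  then have "c^2 = 1" by (simp only: norm_qmk) simp
  then have c: "c = 1 \<or> c = -1" by (simp add: power2_eq_1_iff)
  have all: "\<psi> x = c *\<^sub>R x" for x
  proof -
    have "\<psi> x = x$1 *\<^sub>R \<psi> e1 + x$2 *\<^sub>R \<psi> e2 + x$3 *\<^sub>R \<psi> e3 + x$4 *\<^sub>R \<psi> e4"
      by (subst qdecomp) (simp add: lin e1_def e2_def e3_def e4_def)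
    then show ?thesis using a1 a2 a3 a4 b2 b3 b4
      by (simp add: vec_eq_iff forall_4 c_def mult.commute)
  qed
  show "\<psi> = id \<or> \<psi> = (\<lambda>x. - x)"
    using c all by auto
qed

end
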